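(* Let $\mathcal O$ be a phylogenetic quiver with evolutionary sequence $(\mathcal O_m,\le)_{m\ge0}$, $p:\mathcal O_m\to\mathcal O_{m-1}$. Let $a\in\mathcal O_m$, $b\in\mathcal O_n$ with $m,n\ge0$. Then: (i) $a\le b$ if and only if $m\le n$ and $a\le p^{n-m}(b)$ in $\mathcal O_m$ (where $p^0$ is the identity); (ii) if $m=n=0$, then $a\le b\iff a=b$; (iii) if $m=n\ge1$ and $a\le b$, then $p(a)=p(b)$; (iv) if $n=m+1$, then $p(b)=a$ if and only if there is an edge $B\to A$ in $\mathcal O$ with $A,B$ vertices of $\mathcal O$ representing $a,b$ respectively.
   Context: A quiver consists of a class of vertices and, for each ordered pair of vertices $(A,B)$, a set of edges $A\to B$ (loops and multiple edges allowed). An evolution of length $m\ge 0$ is a sequence $A_0\leftarrow A_1\leftarrow\cdots\leftarrow A_m$ of vertices together with edges $A_k\to A_{k-1}$ ($1\le k\le m$); $A_0$ is its initial and $A_m$ its terminal vertex. Write $A\le B$ ($A$ is an ancestor of $B$) if there is an evolution with initial vertex $A$ and terminal vertex $B$; $A,B$ are isotypic ($A\sim B$) if $A\le B$ and $B\le A$. A vertex $A$ is primitive if every ancestor of $A$ is isotypic to $A$. A full evolution for $X$ is an evolution with primitive initial vertex and terminal vertex $X$. The height $h(X)$ is the smallest length of a full evolution for $X$ ($\infty$ if none). An evolution $\alpha=(A_0\leftarrow\cdots\leftarrow A_m)$ embeds in $\beta=(B_0\leftarrow\cdots\leftarrow B_n)$ if $m\le n$ and there are $0\le r_0<\cdots<r_m\le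 n$ with $A_k\sim B_{r_k}$. A universal evolution for $X$ is a full evolution for $X$ embedding in every full evolution for $X$; $X$ is phylogenetic if one exists. A quiver is monotonous if $h(A)\ge h(B)$ for every edge $A\to B$; small if its isotypy classes form a set; phylogenetic if small, monotonous, and all vertices phylogenetic. Evolutionary sequence of a phylogenetic quiver $\mathcal O$: let $\mathcal O_m$ be the set of isotypy classes $[A]$ of vertices of height $m$, with the relation $[A]\le[B]$ iff $A\le B$ (a partial order on the set of all isotypy classes); for $m\ge1$ the parental map $p:\mathcal O_m\to\mathcal O_{m-1}$ is $p([A])=[A_{m-1}]$ where $A_0\leftarrow\cdots\leftarrow A_{m-1}\leftarrow A_m=A$ is any universal evolution for $A$ (this is well defined). *)

theory Defs
  imports Main "HOL-Library.Extended_Nat"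
begin

text \<open>An evolution A_0 <- A_1 <- ... <- A_m is a pair
  (vertex list [A_0,...,A_m], edge list [e_1,...,e_m]) with e_k : A_k -> A_(k-1).\<close>

definition is_evol :: "('e \<Rightarrow> 'v) \<Rightarrow> ('e \<Rightarrow> 'v) \<Rightarrow> 'v list \<times> 'e list \<Rightarrow> bool" where
  "is_evol src tgt ev \<longleftrightarrow> fst ev \<noteq> [] \<and> length (snd ev) = length (fst ev) - 1 \<and>
     (\<forall>k < length (snd ev). src (snd ev ! k) = fst ev ! Suc k \<and> tgt (snd ev ! k) = fst ev ! k)"

definition evol_len :: "'v list \<times> 'e list \<Rightarrow> nat" where
  "evol_len ev = length (fst ev) - 1"

definition initial :: "'v list \<times> 'e list \<Rightarrow> 'v" where
  "initial ev = hd (fst ev)"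

definition terminal :: "'v list \<times> 'e list \<Rightarrow> 'v" where
  "terminal ev = last (fst ev)"

definition ancestor :: "('e \<Rightarrow> 'v) \<Rightarrow> ('e \<Rightarrow> 'v) \<Rightarrow> 'v \<Rightarrow> 'v \<Rightarrow> bool" where
  "ancestor src tgt A B \<longleftrightarrow> (\<exists>ev. is_evol src tgt ev \<and> initial ev = A \<and> terminal ev = B)"

definition isotypic :: "('e \<Rightarrow> 'v) \<Rightarrow> ('e \<Rightarrow> 'v) \<Rightarrow> 'v \<Rightarrow> 'v \<Rightarrow> bool" where
  "isotypic src tgt A B \<longleftrightarrow> ancestor src tgt A B \<and> ancestor src tgt B A"

definition primitive :: "('e \<Rightarrow> 'v) \<Rightarrow> ('e \<Rightarrow> 'v) \<Rightarrow> 'v \<Rightarrow> bool" where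
  "primitive src tgt A \<longleftrightarrow> (\<forall>B. ancestor src tgt B A \<longrightarrow> isotypic src tgt B A)"

definition full_evol :: "('e \<Rightarrow> 'v) \<Rightarrow> ('e \<Rightarrow> 'v) \<Rightarrow> 'v list \<times> 'e list \<Rightarrow> 'v \<Rightarrow> bool" where
  "full_evol src tgt ev X \<longleftrightarrow> is_evol src tgt ev \<and> primitive src tgt (initial ev) \<and> terminal ev = X"

definition height :: "('e \<Rightarrow> 'v) \<Rightarrow> ('e \<Rightarrow> 'v) \<Rightarrow> 'v \<Rightarrow> enat" where
  "height src tgt X =
     (if \<exists>ev. full_evol src tgt ev X
      then enat (LEAST m. \<exists>ev. full_evol src tgt ev X \<and> evol_len ev = m)
      else \<infinity>)"

definition embeds :: "('e \<Rightarrow> 'v) \<Rightarrow> ('e \<Rightarrow> 'v) \<Rightarrow> 'v list \<times> 'e list \<Rightarrow> 'v list \<times> 'e list \<Rightarrow> bool" where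
  "embeds src tgt \<alpha> \<beta> \<longleftrightarrow> evol_len \<alpha> \<le> evol_len \<beta> \<and>
     (\<exists>r :: nat \<Rightarrow> nat. (\<forall>i j. i < j \<and> j \<le> evol_len \<alpha> \<longrightarrow> r i < r j) \<and>
        r (evol_len \<alpha>) \<le> evol_len \<beta> \<and>
        (\<forall>k \<le> evol_len \<alpha>. isotypic src tgt (fst \<alpha> ! k) (fst \<beta> ! r k)))"

definition universal_evol :: "('e \<Rightarrow> 'v) \<Rightarrow> ('e \<Rightarrow> 'v) \<Rightarrow> 'v list \<times> 'e list \<Rightarrow> 'v \<Rightarrow> bool" where
  "universal_evol src tgt ev X \<longleftrightarrow> full_evol src tgt ev X \<and>
     (\<forall>\<beta>. full_evol src tgt \<beta> X \<longrightarrow> embeds src tgt ev \<beta>)"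

definition phylogenetic_vertex :: "('e \<Rightarrow> 'v) \<Rightarrow> ('e \<Rightarrow> 'v) \<Rightarrow> 'v \<Rightarrow> bool" where
  "phylogenetic_vertex src tgt X \<longleftrightarrow> (\<exists>ev. universal_evol src tgt ev X)"

definition monotonous :: "('e \<Rightarrow> 'v) \<Rightarrow> ('e \<Rightarrow> 'v) \<Rightarrow> bool" where
  "monotonous src tgt \<longleftrightarrow> (\<forall>e. height src tgt (src e) \<ge> height src tgt (tgt e))"

text \<open>Smallness is automatic in HOL: isotypy classes are subsets of the type 'v.\<close>
definition phylogenetic_quiver :: "('e \<Rightarrow> 'v) \<Rightarrow> ('e \<Rightarrow> 'v) \<Rightarrow> bool" where
  "phylogenetic_quiver src tgt \<longleftrightarrow> monotonous src tgt \<and> (\<forall>X. phylogenetic_vertex src tgt X)"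

definition iso_class :: "('e \<Rightarrow> 'v) \<Rightarrow> ('e \<Rightarrow> 'v) \<Rightarrow> 'v \<Rightarrow> 'v set" where
  "iso_class src tgt A = {B. isotypic src tgt A B}"

definition evo_level :: "('e \<Rightarrow> 'v) \<Rightarrow> ('e \<Rightarrow> 'v) \<Rightarrow> nat \<Rightarrow> 'v set set" where
  "evo_level src tgt m = {iso_class src tgt A | A. height src tgt A = enat m}"

definition class_le :: "('e \<Rightarrow> 'v) \<Rightarrow> ('e \<Rightarrow> 'v) \<Rightarrow> 'v set \<Rightarrow> 'v set \<Rightarrow> bool" where
  "class_le src tgt a b \<longleftrightarrow>
     (\<exists>A B. a = iso_class src tgt A \<and> b = iso_class src tgt B \<and> ancestor src tgt A B)"

definition parent :: "('e \<Rightarrow> 'v) \<Rightarrow> ('e \<Rightarrow> 'v) \<Rightarrow> 'v set \<Rightarrow> 'v set" where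
  "parent src tgt a = (SOME c. \<exists>A ev. a = iso_class src tgt A \<and> universal_evol src tgt ev A \<and>
       c = iso_class src tgt (fst ev ! (evol_len ev - 1)))"

end

theory Submission
  imports Defs
begin


locale phq =
  fixes src tgt :: "'e \<Rightarrow> 'v"
  assumes phyl: "phylogenetic_quiver src tgt"
begin

definition E :: "'v \<Rightarrow> 'v \<Rightarrow> bool" where
  "E x y \<longleftrightarrow> (\<exists>e. src e = y \<and> tgt e = x)"

lemma evol_chain:
  assumes "is_evol src tgt ev"
  shows "fst ev \<noteq> [] \<and> successively E (fst ev)"
proof -
  have "\<forall>i. Suc i < length (fst ev) \<longrightarrow> E (fst ev ! i) (fst ev ! Suc i)"
  proof (intro allI impI)
    fix i assume "Suc i < length (fst ev)"
    then have "i < length (snd ev)" using assms unfolding is_evol_def by auto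
    then show "E (fst ev ! i) (fst ev ! Suc i)" using assms unfolding is_evol_def E_def by blast
  qed
  then show ?thesis using assms unfolding is_evol_def successively_conv_nth by blast
qed

lemma chain_evol:
  assumes "vs \<noteq> []" "successively E vs"
  shows "\<exists>es. is_evol src tgt (vs, es)"
proof -
  define es where "es = map (\<lambda>k. SOME e. src e = vs ! Suc k \<and> tgt e = vs ! k) [0..<length vs - 1]"
  have "\<forall>k < length es. src (es ! k) = vs ! Suc k \<and> tgt (es ! k) = vs ! k"
  proof (intro allI impI)
    fix k assume k: "k < length es"
    then have "Suc k < length vs" by (simp add: es_def)
    then have "E (vs ! k) (vs ! Suc k)" using assms successively_nth by fast
    then have "\<exists>e. src e = vs ! Suc k \<and> tgt e = vs ! k" by (simp add: E_def)
    from someI_ex[OF this] show "src (es ! k) = vs ! Suc k \<and> tgt (es ! k) = vs ! k"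
      using k by (simp add: es_def)
  qed
  then have "is_evol src tgt (vs, es)" using assms(1) by (simp add: is_evol_def es_def)
  then show ?thesis by blast
qed

lemma chain_rtranclp:
  assumes "successively E vs" "vs \<noteq> []"
  shows "E\<^sup>*\<^sup>* (hd vs) (last vs)"
  using assms
proof (induction vs)
  case Nil then show ?case by simp
next
  case (Cons x xs)
  show ?case
  proof (cases "xs = []")
    case True then show ?thesis by simp
  next
    case False
    then have "E x (hd xs)" "successively E xs" using Cons.prems by (auto simp: successively_Cons)
    with Cons.IH False show ?thesis by (simp add: converse_rtranclp_into_rtranclp)
  qed
qed

lemma rtranclp_chain:
  assumes "E\<^sup>*\<^sup>* A B"
  shows "\<exists>vs. vs \<noteq> [] \<and> successively E vs \<and> hd vs = A \<and> last vs = B"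
  using assms
proof (induction rule: rtranclp_induct)
  case base
  then show ?case by (intro exI[of _ "[A]"]) simp
next
  case (step y z)
  then obtain vs where vs: "vs \<noteq> []" "successively E vs" "hd vs = A" "last vs = y" by blast
  then have "successively E (vs @ [z])" using step by (simp add: successively_append_iff)
  then show ?case using vs by (intro exI[of _ "vs @ [z]"]) simp
qed

lemma ancestor_iff: "ancestor src tgt A B \<longleftrightarrow> E\<^sup>*\<^sup>* A B"
proof
  assume "ancestor src tgt A B"
  then obtain ev where "is_evol src tgt ev" "initial ev = A" "terminal ev = B"
    unfolding ancestor_def by blast
  then show "E\<^sup>*\<^sup>* A B" using evol_chain chain_rtranclp unfolding initial_def terminal_def by blast
next
  assume "E\<^sup>*\<^sup>* A B"
  then obtain vs where vs: "vs \<noteq> []" "successively E vs" "hd vs = A" "last vs = B"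
    using rtranclp_chain by blast
  then obtain es where "is_evol src tgt (vs, es)" using chain_evol by blast
  then show "ancestor src tgt A B" using vs unfolding ancestor_def initial_def terminal_def by force
qed

lemma chain_nth_rtranclp:
  assumes "successively E vs" "i \<le> j" "j < length vs"
  shows "E\<^sup>*\<^sup>* (vs ! i) (vs ! j)"
  using assms(2,3)
proof (induction j)
  case 0 then show ?case by simp
next
  case (Suc j)
  show ?case
  proof (cases "i = Suc j")
    case True then show ?thesis by simp
  next
    case False
    then have "E\<^sup>*\<^sup>* (vs ! i) (vs ! j)" using Suc by simp
    moreover have "E (vs ! j) (vs ! Suc j)" using assms(1) Suc.prems successively_nth by fast
    ultimately show ?thesis by (simp add: rtranclp.rtrancl_into_rtrancl)
  qed
qed

lemma isotypic_iff: "isotypic src tgt A B \<longleftrightarrow> E\<^sup>*\<^sup>* A B \<and> E\<^sup>*\<^sup>* B A"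
  by (simp add: isotypic_def ancestor_iff)

lemma iso_class_eq: "iso_class src tgt A = iso_class src tgt B \<longleftrightarrow> isotypic src tgt A B"
proof
  assume "iso_class src tgt A = iso_class src tgt B"
  moreover have "B \<in> iso_class src tgt B" by (simp add: iso_class_def isotypic_iff)
  ultimately show "isotypic src tgt A B" unfolding iso_class_def by blast
next
  assume "isotypic src tgt A B"
  then show "iso_class src tgt A = iso_class src tgt B"
    unfolding iso_class_def isotypic_iff by (auto intro: rtranclp_trans)
qed

lemma class_le_iff: "class_le src tgt (iso_class src tgt A) (iso_class src tgt B) \<longleftrightarrow> E\<^sup>*\<^sup>* A B"
proof
  assume "class_le src tgt (iso_class src tgt A) (iso_class src tgt B)"
  then obtain A' B' where "iso_class src tgt A = iso_class src tgt A'"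
    "iso_class src tgt B = iso_class src tgt B'" "E\<^sup>*\<^sup>* A' B'"
    unfolding class_le_def ancestor_iff by blast
  then show "E\<^sup>*\<^sup>* A B" unfolding iso_class_eq isotypic_iff by (meson rtranclp_trans)
next
  assume "E\<^sup>*\<^sup>* A B" then show "class_le src tgt (iso_class src tgt A) (iso_class src tgt B)"
    unfolding class_le_def ancestor_iff by blast
qed

end


context phq begin

definition fc :: "'v list \<Rightarrow> 'v \<Rightarrow> bool" where
  "fc vs X \<longleftrightarrow> vs \<noteq> [] \<and> successively E vs \<and> primitive src tgt (hd vs) \<and> last vs = X"

lemma full_fc: "full_evol src tgt ev X \<Longrightarrow> fc (fst ev) X"
  unfolding full_evol_def fc_def initial_def terminal_def using evol_chain by blast

lemma fc_full: "fc vs X \<Longrightarrow> \<exists>es. full_evol src tgt (vs, es) X"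
  unfolding full_evol_def fc_def initial_def terminal_def using chain_evol by force

lemma height_le: assumes "fc vs X" shows "height src tgt X \<le> enat (length vs - 1)"
proof -
  obtain es where es: "full_evol src tgt (vs, es) X" using fc_full assms by blast
  then have ex: "\<exists>ev. full_evol src tgt ev X" by blast
  have "(LEAST m. \<exists>ev. full_evol src tgt ev X \<and> evol_len ev = m) \<le> length vs - 1"
    by (rule Least_le) (use es in \<open>auto simp: evol_len_def\<close>)
  then show ?thesis using ex unfolding height_def by simp
qed

lemma univ_exists: "\<exists>U. universal_evol src tgt U X"
  using phyl unfolding phylogenetic_quiver_def phylogenetic_vertex_def by blast

lemma height_witness: "\<exists>ws. fc ws X \<and> height src tgt X = enat (length ws - 1)"
proof -
  obtain U where "universal_evol src tgt U X" using univ_exists by blast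
  then have ex: "\<exists>ev. full_evol src tgt ev X" unfolding universal_evol_def by blast
  then have ex2: "\<exists>m ev. full_evol src tgt ev X \<and> evol_len ev = m" by blast
  obtain ev where ev: "full_evol src tgt ev X" "evol_len ev = (LEAST m. \<exists>ev. full_evol src tgt ev X \<and> evol_len ev = m)"
    using LeastI_ex[OF ex2] by blast
  have "height src tgt X = enat (evol_len ev)" using ex ev(2) unfolding height_def by simp
  then show ?thesis using full_fc[OF ev(1)] unfolding evol_len_def by blast
qed

definition hn :: "'v \<Rightarrow> nat" where "hn X = the_enat (height src tgt X)"

lemma height_fin: "height src tgt X = enat (hn X)"
  using height_witness[of X] unfolding hn_def by auto

lemma hn_le: "fc vs X \<Longrightarrow> hn X \<le> length vs - 1"
  using height_le[of vs X] height_fin[of X] by simp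

lemma hn_wit: "\<exists>ws. fc ws X \<and> length ws = Suc (hn X)"
proof -
  obtain ws where "fc ws X" "height src tgt X = enat (length ws - 1)" using height_witness by blast
  moreover then have "ws \<noteq> []" by (simp add: fc_def)
  ultimately show ?thesis using height_fin[of X] by (intro exI[of _ ws]) auto
qed

lemma univ_len:
  assumes "universal_evol src tgt U X"
  shows "fc (fst U) X \<and> length (fst U) = Suc (hn X)"
proof -
  have fc: "fc (fst U) X" using assms full_fc unfolding universal_evol_def by blast
  obtain ws where ws: "fc ws X" "length ws = Suc (hn X)" using hn_wit by blast
  obtain es where "full_evol src tgt (ws, es) X" using fc_full ws by blast
  then have "embeds src tgt U (ws, es)" using assms unfolding universal_evol_def by blast
  then have "length (fst U) - 1 \<le> hn X" using ws unfolding embeds_def evol_len_def by simp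
  moreover have "hn X \<le> length (fst U) - 1" using hn_le fc by blast
  moreover have "fst U \<noteq> []" using fc by (simp add: fc_def)
  ultimately show ?thesis using fc by auto
qed

lemma hn_mono1: "E x y \<Longrightarrow> hn x \<le> hn y"
  using phyl height_fin unfolding phylogenetic_quiver_def monotonous_def E_def
  by (metis enat_ord_simps(1))

lemma hn_mono: "E\<^sup>*\<^sup>* x y \<Longrightarrow> hn x \<le> hn y"
  by (induction rule: rtranclp_induct) (auto dest: hn_mono1)

lemma iso_hn: "isotypic src tgt A B \<Longrightarrow> hn A = hn B"
  unfolding isotypic_iff using hn_mono le_antisym by blast

lemma successively_take: "successively P xs \<Longrightarrow> successively P (take n xs)"
  unfolding successively_conv_nth by auto

lemma successively_drop: "successively P xs \<Longrightarrow> successively P (drop n xs)"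
  unfolding successively_conv_nth by auto

lemma fc_take: assumes "fc vs X" "i < length vs" shows "fc (take (Suc i) vs) (vs ! i)"
  using assms unfolding fc_def
  by (auto simp: successively_take hd_take last_conv_nth)

lemma fc_append:
  assumes "fc ws A" "successively E P" "P \<noteq> []" "hd P = A"
  shows "fc (ws @ tl P) (last P)"
proof (cases P)
  case Nil then show ?thesis using assms by simp
next
  case (Cons p P')
  then have "successively E (ws @ P')" using assms
    by (auto simp: successively_append_iff successively_Cons fc_def)
  then show ?thesis using assms Cons by (auto simp: fc_def)
qed

lemma minimal_heights:
  assumes vs: "fc vs X" "length vs = Suc (hn X)" and i: "i < length vs"
  shows "hn (vs ! i) = i"
proof (rule antisym)
  show "hn (vs ! i) \<le> i" using hn_le[OF fc_take[OF vs(1) i]] i by simp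
next
  show "i \<le> hn (vs ! i)"
  proof (rule ccontr)
    assume lt: "\<not> i \<le> hn (vs ! i)"
    obtain ws where ws: "fc ws (vs ! i)" "length ws = Suc (hn (vs ! i))" using hn_wit by blast
    have P: "successively E (drop i vs)" "drop i vs \<noteq> []" "hd (drop i vs) = vs ! i"
      "last (drop i vs) = X"
      using vs i by (auto simp: successively_drop fc_def hd_drop_conv_nth)
    have "fc (ws @ tl (drop i vs)) X" using fc_append[OF ws(1) P(1-3)] P(4) by simp
    then have "hn X \<le> length (ws @ tl (drop i vs)) - 1" by (rule hn_le)
    then show False using lt ws(2) vs(2) i by simp
  qed
qed

lemma primitive_iff: "primitive src tgt X \<longleftrightarrow> (\<forall>B. E\<^sup>*\<^sup>* B X \<longrightarrow> E\<^sup>*\<^sup>* X B)"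
  unfolding primitive_def ancestor_iff isotypic_iff by blast

end


context phq begin

lemma nth_last: "length xs = Suc k \<Longrightarrow> xs ! k = last xs"
  by (cases xs rule: rev_cases) (auto simp: nth_append)

lemma EXT:
  assumes U: "universal_evol src tgt U B"
    and V: "fc V A" "length V = Suc m"
    and P: "successively E P" "P \<noteq> []" "hd P = A" "last P = B"
  shows "\<exists>r. (\<forall>i j. i < j \<and> j \<le> hn B \<longrightarrow> r i < r j) \<and> r (hn B) < m + length P \<and>
     (\<forall>k \<le> hn B. isotypic src tgt (fst U ! k) ((V @ tl P) ! r k))"
proof -
  have "fc (V @ tl P) B" using fc_append[OF V(1) P(1-3)] P(4) by simp
  then obtain es where "full_evol src tgt (V @ tl P, es) B" using fc_full by blast
  then have "embeds src tgt U (V @ tl P, es)" using U unfolding universal_evol_def by blast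
  moreover have "evol_len U = hn B" using univ_len[OF U] by (simp add: evol_len_def)
  moreover have "evol_len (V @ tl P, es) = m + length P - 1" using V(2) P(2) by (cases P) (auto simp: evol_len_def)
  ultimately obtain r where "(\<forall>i j. i < j \<and> j \<le> hn B \<longrightarrow> r i < r j)" "r (hn B) \<le> m + length P - 1"
    "\<forall>k \<le> hn B. isotypic src tgt (fst U ! k) ((V @ tl P) ! r k)"
    unfolding embeds_def by auto
  then show ?thesis using P(2) by (intro exI[of _ r]) (cases P; auto)
qed

lemma r_ge:
  assumes "\<forall>i j. i < j \<and> j \<le> n \<longrightarrow> r i < r (j::nat)" "i \<le> n"
  shows "i \<le> (r i :: nat)"
  using assms(2)
proof (induction i)
  case 0 then show ?case by simp
next
  case (Suc i)
  then have "r i < r (Suc i)" using assms(1) by simp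
  then show ?case using Suc by simp
qed

lemma W_nth1: "length V = Suc m \<Longrightarrow> j \<le> m \<Longrightarrow> (V @ tl P) ! j = V ! j"
  by (simp add: nth_append)

lemma W_nth2:
  assumes "length V = Suc m" "P \<noteq> []" "hd P = last V" "m \<le> j" "j < m + length P"
  shows "(V @ tl P) ! j = P ! (j - m)"
proof (cases "j = m")
  case True
  then have "(V @ tl P) ! j = last V" using assms nth_last[of V m] by (simp add: nth_append)
  then show ?thesis using assms True by (simp add: hd_conv_nth)
next
  case False
  then have "(V @ tl P) ! j = tl P ! (j - Suc m)" using assms by (simp add: nth_append)
  also have "\<dots> = P ! (j - m)" using assms False by (simp add: nth_tl Suc_diff_Suc)
  finally show ?thesis .
qed

lemma W_anc:
  assumes "fc V A" "length V = Suc m" "successively E P" "P \<noteq> []" "hd P = A"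
    "m \<le> j" "j < m + length P"
  shows "E\<^sup>*\<^sup>* A ((V @ tl P) ! j)"
proof -
  have "hd P = last V" using assms by (simp add: fc_def)
  then have "(V @ tl P) ! j = P ! (j - m)" using W_nth2 assms by blast
  moreover have "E\<^sup>*\<^sup>* (P ! 0) (P ! (j - m))" using chain_nth_rtranclp assms by simp
  ultimately show ?thesis using assms by (simp add: hd_conv_nth)
qed

lemma C1:
  assumes U: "universal_evol src tgt U B"
    and V: "fc V A" "length V = Suc (hn A)"
    and AB: "E\<^sup>*\<^sup>* A B" and i: "i < hn A" "i \<le> hn B"
  shows "isotypic src tgt (fst U ! i) (V ! i)"
proof -
  obtain P where P: "P \<noteq> []" "successively E P" "hd P = A" "last P = B"
    using rtranclp_chain[OF AB] by blast
  obtain r where r: "\<forall>i j. i < j \<and> j \<le> hn B \<longrightarrow> r i < r j" "r (hn B) < hn A + length P"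
     "\<forall>k \<le> hn B. isotypic src tgt (fst U ! k) ((V @ tl P) ! r k)"
    using EXT[OF U V P(2,1,3,4)] by blast
  have Ul: "fc (fst U) B" "length (fst U) = Suc (hn B)" using univ_len[OF U] by auto
  have h1: "hn (fst U ! i) = i" using minimal_heights[OF Ul] i Ul(2) by simp
  have iso: "isotypic src tgt (fst U ! i) ((V @ tl P) ! r i)" using r(3) i by simp
  then have h2: "hn ((V @ tl P) ! r i) = i" using iso_hn h1 by simp
  have rle: "r i \<le> r (hn B)" using r(1) i by (cases "i = hn B") (auto simp: less_imp_le)
  have "r i < hn A"
  proof (rule ccontr)
    assume "\<not> r i < hn A"
    then have "E\<^sup>*\<^sup>* A ((V @ tl P) ! r i)" using W_anc[OF V P(2,1,3)] rle r(2) by simp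
    then have "hn A \<le> i" using hn_mono h2 by fastforce
    then show False using i by simp
  qed
  then have "(V @ tl P) ! r i = V ! r i" using W_nth1[OF V(2)] by simp
  moreover have "hn (V ! r i) = r i" using minimal_heights[OF V] \<open>r i < hn A\<close> V(2) by simp
  ultimately have "r i = i" using h2 by simp
  then show ?thesis using iso \<open>(V @ tl P) ! r i = V ! r i\<close> by simp
qed

lemma C2:
  assumes U: "universal_evol src tgt U B" and AB: "E\<^sup>*\<^sup>* A B"
  shows "E\<^sup>*\<^sup>* A (fst U ! hn A)"
proof -
  obtain V where V: "fc V A" "length V = Suc (hn A)" using hn_wit by blast
  obtain P where P: "P \<noteq> []" "successively E P" "hd P = A" "last P = B"
    using rtranclp_chain[OF AB] by blast
  have mB: "hn A \<le> hn B" using hn_mono AB by blast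
  obtain r where r: "\<forall>i j. i < j \<and> j \<le> hn B \<longrightarrow> r i < r j" "r (hn B) < hn A + length P"
     "\<forall>k \<le> hn B. isotypic src tgt (fst U ! k) ((V @ tl P) ! r k)"
    using EXT[OF U V P(2,1,3,4)] by blast
  have ge: "hn A \<le> r (hn A)" using r_ge[OF r(1) mB] .
  have rle: "r (hn A) \<le> r (hn B)" using r(1) mB by (cases "hn A = hn B") (auto simp: less_imp_le)
  have "E\<^sup>*\<^sup>* A ((V @ tl P) ! r (hn A))" using W_anc[OF V P(2,1,3)] ge rle r(2) by simp
  moreover have "E\<^sup>*\<^sup>* ((V @ tl P) ! r (hn A)) (fst U ! hn A)" using r(3) mB isotypic_iff by blast
  ultimately show ?thesis by (rule rtranclp_trans)
qed

lemma C3: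
  assumes U: "universal_evol src tgt U B" and AB: "E A B" and h: "hn B = Suc (hn A)"
  shows "isotypic src tgt (fst U ! hn A) A"
proof -
  obtain V where V: "fc V A" "length V = Suc (hn A)" using hn_wit by blast
  have P: "[A, B] \<noteq> []" "successively E [A, B]" "hd [A, B] = A" "last [A, B] = B" using AB by auto
  obtain r where r: "\<forall>i j. i < j \<and> j \<le> hn B \<longrightarrow> r i < r j" "r (hn B) < hn A + length [A, B]"
     "\<forall>k \<le> hn B. isotypic src tgt (fst U ! k) ((V @ tl [A, B]) ! r k)"
    using EXT[OF U V P(2,1,3,4)] by blast
  have ge: "hn A \<le> r (hn A)" using r_ge[OF r(1)] h by simp
  have "r (hn A) < r (hn B)" using r(1) h by simp
  then have "r (hn A) = hn A" using ge r(2) h by simp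
  moreover have "(V @ tl [A, B]) ! hn A = A" using V nth_last[of V "hn A"] by (simp add: nth_append fc_def)
  moreover have "isotypic src tgt (fst U ! hn A) ((V @ tl [A, B]) ! r (hn A))" using r(3) h by simp
  ultimately show ?thesis by simp
qed

lemma parent_eq:
  assumes U: "universal_evol src tgt U B" and h: "hn B = Suc k"
  shows "parent src tgt (iso_class src tgt B) = iso_class src tgt (fst U ! k)"
proof -
  have Ul: "length (fst U) = Suc (hn B)" using univ_len[OF U] by auto
  let ?Q = "\<lambda>c. \<exists>A ev. iso_class src tgt B = iso_class src tgt A \<and> universal_evol src tgt ev A \<and>
       c = iso_class src tgt (fst ev ! (evol_len ev - 1))"
  have "?Q (iso_class src tgt (fst U ! (evol_len U - 1)))" using U by blast
  then have "?Q (parent src tgt (iso_class src tgt B))" unfolding parent_def by (rule someI)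
  then obtain A ev where A: "iso_class src tgt B = iso_class src tgt A" "universal_evol src tgt ev A"
    "parent src tgt (iso_class src tgt B) = iso_class src tgt (fst ev ! (evol_len ev - 1))" by blast
  have iso: "isotypic src tgt B A" using A(1) iso_class_eq by blast
  then have hA: "hn A = Suc k" using iso_hn h by simp
  have evl: "fc (fst ev) A" "length (fst ev) = Suc (hn A)" using univ_len[OF A(2)] by auto
  then have "evol_len ev - 1 = k" using hA by (simp add: evol_len_def)
  moreover have "E\<^sup>*\<^sup>* A B" using iso isotypic_iff by blast
  ultimately have "isotypic src tgt (fst U ! k) (fst ev ! (evol_len ev - 1))"
    using C1[OF U evl] hA h by simp
  then have "iso_class src tgt (fst U ! k) = iso_class src tgt (fst ev ! (evol_len ev - 1))"
    using iso_class_eq by blast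
  then show ?thesis using A(3) by simp
qed

lemma iter:
  "hn B = m + d \<Longrightarrow> \<exists>C. (parent src tgt ^^ d) (iso_class src tgt B) = iso_class src tgt C \<and> hn C = m \<and>
     (\<forall>A. hn A = m \<longrightarrow> (E\<^sup>*\<^sup>* A B \<longleftrightarrow> E\<^sup>*\<^sup>* A C))"
proof (induction d arbitrary: B)
  case 0 then show ?case by auto
next
  case (Suc d)
  obtain U where U: "universal_evol src tgt U B" using univ_exists by blast
  have Ul: "fc (fst U) B" "length (fst U) = Suc (hn B)" using univ_len[OF U] by auto
  define B' where "B' = fst U ! (m + d)"
  have pB: "parent src tgt (iso_class src tgt B) = iso_class src tgt B'"
    unfolding B'_def using parent_eq[OF U] Suc.prems by simp
  have hB': "hn B' = m + d" unfolding B'_def using minimal_heights[OF Ul] Suc.prems Ul(2) by simp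
  obtain C where C: "(parent src tgt ^^ d) (iso_class src tgt B') = iso_class src tgt C" "hn C = m"
    "\<forall>A. hn A = m \<longrightarrow> (E\<^sup>*\<^sup>* A B' \<longleftrightarrow> E\<^sup>*\<^sup>* A C)" using Suc.IH[OF hB'] by blast
  have lastU: "fst U ! Suc (m + d) = B" using Ul Suc.prems nth_last[of "fst U" "Suc (m + d)"] by (simp add: fc_def)
  have chainU: "successively E (fst U)" using Ul by (simp add: fc_def)
  have "E\<^sup>*\<^sup>* A B \<longleftrightarrow> E\<^sup>*\<^sup>* A C" if hA: "hn A = m" for A
  proof -
    have "E\<^sup>*\<^sup>* A B \<longleftrightarrow> E\<^sup>*\<^sup>* A B'"
    proof
      assume "E\<^sup>*\<^sup>* A B"
      then have "E\<^sup>*\<^sup>* A (fst U ! m)" using C2[OF U] hA by blast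
      moreover have "E\<^sup>*\<^sup>* (fst U ! m) B'" unfolding B'_def
        using chain_nth_rtranclp[OF chainU] Ul(2) Suc.prems by simp
      ultimately show "E\<^sup>*\<^sup>* A B'" by (rule rtranclp_trans)
    next
      assume "E\<^sup>*\<^sup>* A B'"
      moreover have "E\<^sup>*\<^sup>* B' B" unfolding B'_def
        using chain_nth_rtranclp[OF chainU, of "m + d" "Suc (m + d)"] Ul(2) Suc.prems lastU by simp
      ultimately show "E\<^sup>*\<^sup>* A B" by (rule rtranclp_trans)
    qed
    then show ?thesis using C(3) hA by simp
  qed
  moreover have "(parent src tgt ^^ Suc d) (iso_class src tgt B) = iso_class src tgt C"
    unfolding funpow_Suc_right comp_apply pB by (rule C(1))
  ultimately show ?case using C(2) by blast
qed

lemma level: "a \<in> evo_level src tgt m \<Longrightarrow> \<exists>A. a = iso_class src tgt A \<and> hn A = m"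
  unfolding evo_level_def using height_fin by auto

lemma hn0_prim: "hn A = 0 \<Longrightarrow> primitive src tgt A"
proof -
  assume "hn A = 0"
  then obtain ws where "fc ws A" "length ws = 1" using hn_wit by fastforce
  then show ?thesis by (cases ws) (auto simp: fc_def)
qed

end


context phq begin

lemma main:
  assumes a: "a \<in> evo_level src tgt m" and b: "b \<in> evo_level src tgt n"
  shows "(class_le src tgt a b \<longleftrightarrow> m \<le> n \<and> class_le src tgt a ((parent src tgt ^^ (n - m)) b))
     \<and> (m = 0 \<and> n = 0 \<longrightarrow> (class_le src tgt a b \<longleftrightarrow> a = b))
     \<and> (m = n \<and> m \<ge> 1 \<and> class_le src tgt a b \<longrightarrow> parent src tgt a = parent src tgt b)
     \<and> (n = m + 1 \<longrightarrow> (parent src tgt b = a \<longleftrightarrow>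
           (\<exists>A B e. a = iso_class src tgt A \<and> b = iso_class src tgt B \<and> src e = B \<and> tgt e = A)))"
proof -
  obtain A where A: "a = iso_class src tgt A" "hn A = m" using level[OF a] by blast
  obtain B where B: "b = iso_class src tgt B" "hn B = n" using level[OF b] by blast
  have le: "class_le src tgt a b \<longleftrightarrow> E\<^sup>*\<^sup>* A B" using A B class_le_iff by simp
  have i: "class_le src tgt a b \<longleftrightarrow> m \<le> n \<and> class_le src tgt a ((parent src tgt ^^ (n - m)) b)"
  proof (cases "m \<le> n")
    case True
    then obtain C where C: "(parent src tgt ^^ (n - m)) b = iso_class src tgt C" "hn C = m"
      "\<forall>A'. hn A' = m \<longrightarrow> (E\<^sup>*\<^sup>* A' B \<longleftrightarrow> E\<^sup>*\<^sup>* A' C)" using iter[of B m "n - m"] B by auto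
    show ?thesis using True C A le class_le_iff by simp
  next
    case False
    then show ?thesis using le hn_mono A B by fastforce
  qed
  have ii: "m = 0 \<and> n = 0 \<longrightarrow> (class_le src tgt a b \<longleftrightarrow> a = b)"
  proof
    assume mn: "m = 0 \<and> n = 0"
    then have "primitive src tgt B" using hn0_prim B by simp
    then have "E\<^sup>*\<^sup>* A B \<longleftrightarrow> isotypic src tgt A B" unfolding primitive_iff isotypic_iff by blast
    then show "class_le src tgt a b \<longleftrightarrow> a = b" using le A B iso_class_eq by simp
  qed
  have iii: "m = n \<and> m \<ge> 1 \<and> class_le src tgt a b \<longrightarrow> parent src tgt a = parent src tgt b"
  proof
    assume h: "m = n \<and> m \<ge> 1 \<and> class_le src tgt a b"
    then obtain k where k: "m = Suc k" by (cases m) auto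
    obtain U where U: "universal_evol src tgt U B" using univ_exists by blast
    obtain V where V: "universal_evol src tgt V A" using univ_exists by blast
    have Vl: "fc (fst V) A" "length (fst V) = Suc (hn A)" using univ_len[OF V] by auto
    have pa: "parent src tgt a = iso_class src tgt (fst V ! k)" using parent_eq[OF V] A k by simp
    have pb: "parent src tgt b = iso_class src tgt (fst U ! k)" using parent_eq[OF U] B h k by simp
    have "isotypic src tgt (fst U ! k) (fst V ! k)" using C1[OF U Vl] h le A B k by simp
    then show "parent src tgt a = parent src tgt b" using pa pb iso_class_eq by metis
  qed
  have iv: "n = m + 1 \<longrightarrow> (parent src tgt b = a \<longleftrightarrow>
           (\<exists>A B e. a = iso_class src tgt A \<and> b = iso_class src tgt B \<and> src e = B \<and> tgt e = A))"
  proof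
    assume n: "n = m + 1"
    obtain U where U: "universal_evol src tgt U B" using univ_exists by blast
    have Ul: "fc (fst U) B" "length (fst U) = Suc (hn B)" using univ_len[OF U] by auto
    have pb: "parent src tgt b = iso_class src tgt (fst U ! m)" using parent_eq[OF U] B n by simp
    show "parent src tgt b = a \<longleftrightarrow>
           (\<exists>A B e. a = iso_class src tgt A \<and> b = iso_class src tgt B \<and> src e = B \<and> tgt e = A)"
    proof
      assume "parent src tgt b = a"
      then have a': "a = iso_class src tgt (fst U ! m)" using pb by simp
      have "E (fst U ! m) (fst U ! Suc m)" using Ul B n successively_nth[of E "fst U" m]
        by (simp add: fc_def)
      moreover have "fst U ! Suc m = B" using Ul B n nth_last[of "fst U" "Suc m"] by (simp add: fc_def)
      ultimately show "\<exists>A B e. a = iso_class src tgt A \<and> b = iso_class src tgt B \<and> src e = B \<and> tgt e = A"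
        using a' B unfolding E_def by blast
    next
      assume "\<exists>A B e. a = iso_class src tgt A \<and> b = iso_class src tgt B \<and> src e = B \<and> tgt e = A"
      then obtain A' B' e where e: "a = iso_class src tgt A'" "b = iso_class src tgt B'" "src e = B'" "tgt e = A'"
        by blast
      have hA': "hn A' = m" using e(1) A iso_class_eq iso_hn by metis
      have hB': "hn B' = n" using e(2) B iso_class_eq iso_hn by metis
      obtain U' where U': "universal_evol src tgt U' B'" using univ_exists by blast
      have "E A' B'" using e unfolding E_def by blast
      then have "isotypic src tgt (fst U' ! m) A'" using C3[OF U', of A'] hA' hB' n by simp
      moreover have "parent src tgt b = iso_class src tgt (fst U' ! m)"
        using parent_eq[OF U'] e(2) hB' n by simp
      ultimately show "parent src tgt b = a" using e(1) iso_class_eq by simp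
    qed
  qed
  show ?thesis using i ii iii iv by blast
qed

end


theorem theorem7p1:
  fixes src tgt :: "'e \<Rightarrow> 'v" and a b :: "'v set" and m n :: nat
  assumes phyl: "phylogenetic_quiver src tgt"
    and a: "a \<in> evo_level src tgt m"
    and b: "b \<in> evo_level src tgt n"
  shows "(class_le src tgt a b \<longleftrightarrow> m \<le> n \<and> class_le src tgt a ((parent src tgt ^^ (n - m)) b))
     \<and> (m = 0 \<and> n = 0 \<longrightarrow> (class_le src tgt a b \<longleftrightarrow> a = b))
     \<and> (m = n \<and> m \<ge> 1 \<and> class_le src tgt a b \<longrightarrow> parent src tgt a = parent src tgt b)
     \<and> (n = m + 1 \<longrightarrow> (parent src tgt b = a \<longleftrightarrow>
           (\<exists>A B e. a = iso_class src tgt A \<and> b = iso_class src tgt B \<and> src e = B \<and> tgt e = A)))"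
proof -
  interpret phq src tgt using phyl by unfold_locales
  show ?thesis using main[OF a b] .
qed

end
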